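(* Let $0<p<1$, $0\le y<1$, and let $n\ge 1$ be an integer. Define $Q(n,y,p)=\sum_{k=0}^\infty (-p\,k)_n(-y)^k$. Then \[ Q(n,y,p)=(-1)^{n+1}\frac{y}{y+1}\sum_{k=1}^n s(n,k)(-p)^k\sum_{m=1}^k S(k,m)\,m!\left(-\frac{1}{y+1}\right)^m =(-1)^{n+1}\frac{y}{y+1}\sum_{k=1}^n s(n,k)(-p)^k\,\omega_k\!\left(-\frac{1}{y+1}\right). \]
   Context: $(x)_n=x(x+1)\cdots(x+n-1)$ is the rising factorial. $s(n,k)$ are the (signed) Stirling numbers of the first kind, defined by $x(x-1)\cdots(x-n+1)=\sum_{k=0}^n s(n,k)x^k$, and $S(k,m)$ are the Stirling numbers of the second kind. The geometric polynomials are $\omega_k(x)=\sum_{m=0}^k S(k,m)\,m!\,x^m$. *)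

theory Defs
  imports Complex_Main "HOL-Combinatorics.Stirling"
begin

text \<open>Signed Stirling numbers of the first kind s(n,k):
  x(x-1)...(x-n+1) = sum_k s(n,k) x^k. In terms of the library's unsigned
  Stirling numbers of the first kind, s(n,k) = (-1)^(n-k) * stirling n k.\<close>
definition signed_stirling :: "nat \<Rightarrow> nat \<Rightarrow> real" where
  "signed_stirling n k = (-1) ^ (n - k) * real (stirling n k)"

definition geom_poly :: "nat \<Rightarrow> real \<Rightarrow> real" where
  "geom_poly k x = (\<Sum>m=0..k. real (Stirling k m) * fact m * x ^ m)"

definition Q :: "nat \<Rightarrow> real \<Rightarrow> real \<Rightarrow> real" where
  "Q n y p = (\<Sum>k. pochhammer (- p * real k) n * (- y) ^ k)"

end

theory Submission
  imports Defs "HOL-Analysis.Generalised_Binomial_Theorem"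
begin


lemma poch_swap:
  "fact i * pochhammer (real i + 1) m = fact m * (pochhammer (real m + 1) i :: real)"
proof -
  have "pochhammer (1::real) (i + m) = pochhammer 1 i * pochhammer (1 + real i) m"
    by (rule pochhammer_product')
  moreover have "pochhammer (1::real) (m + i) = pochhammer 1 m * pochhammer (1 + real m) i"
    by (rule pochhammer_product')
  ultimately show ?thesis by (simp add: pochhammer_fact add.commute)
qed

lemma poch_sums:
  fixes z :: real
  assumes "\<bar>z\<bar> < 1" "m \<ge> 1"
  shows "(\<lambda>k. pochhammer (real k) m * z ^ k) sums (fact m * z / (1 - z) ^ (m + 1))"
proof -
  have "\<bar>-z\<bar> < 1" using assms by simp
  from gen_binomial_real[OF this, of "- (real m + 1)"]
  have "(\<lambda>i. (- (real m + 1) gchoose i) * (- z) ^ i) sums (1 + - z) powr (- (real m + 1))" .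
  moreover have "(- (real m + 1) gchoose i) * (- z) ^ i = pochhammer (real m + 1) i / fact i * z ^ i" for i
  proof -
    have "(- 1) ^ i * (- z) ^ i = z ^ i"
      by (simp add: power_mult_distrib[symmetric])
    then show ?thesis by (simp add: gbinomial_pochhammer add.commute mult.assoc mult.left_commute[of "(- 1) ^ i"])
  qed
  moreover have "(1 + - z) powr (- (real m + 1)) = 1 / (1 - z) ^ (m + 1)"
  proof -
    have "1 - z > 0" using assms by simp
    have "(1 + - z) powr (- (real m + 1)) = inverse ((1 - z) powr (real (m + 1)))"
      using powr_minus[of "1 - z" "real (m + 1)"] by (simp add: add.commute)
    also have "(1 - z) powr (real (m + 1)) = (1 - z) ^ (m + 1)"
      using \<open>1 - z > 0\<close> by (rule powr_realpow)
    finally show ?thesis by (simp add: divide_inverse)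
  qed
  ultimately have A: "(\<lambda>i. pochhammer (real m + 1) i / fact i * z ^ i) sums (1 / (1 - z) ^ (m + 1))"
    by simp
  have B: "(\<lambda>i. pochhammer (real (Suc i)) m * z ^ (Suc i)) sums (fact m * z / (1 - z) ^ (m + 1))"
  proof -
    from sums_mult[OF A, of "fact m * z"]
    have "(\<lambda>i. fact m * z * (pochhammer (real m + 1) i / fact i * z ^ i)) sums (fact m * z * (1 / (1 - z) ^ (m + 1)))" .
    moreover have "fact m * z * (pochhammer (real m + 1) i / fact i * z ^ i) = pochhammer (real (Suc i)) m * z ^ (Suc i)" for i
    proof -
      have "pochhammer (real i + 1) m = fact m * pochhammer (real m + 1) i / fact i"
        using poch_swap[of i m] by (simp add: field_simps)
      then show ?thesis by (simp add: add.commute)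
    qed
    ultimately show ?thesis by simp
  qed
  have "pochhammer (real 0) m = 0" using assms by (simp add: pochhammer_0_left)
  with B sums_Suc_iff[of "\<lambda>k. pochhammer (real k) m * z ^ k" "fact m * z / (1 - z) ^ (m + 1)"]
  show ?thesis by simp
qed

lemma power_Stirling:
  "(x::real) ^ j = (\<Sum>m\<le>j. real (Stirling j m) * (-1) ^ (j + m) * pochhammer x m)"
proof (induction j)
  case 0
  then show ?case by simp
next
  case (Suc j)
  define A where "A = (\<Sum>m\<le>j. real (Stirling j m) * (-1) ^ (j + m) * pochhammer x (Suc m))"
  define B where "B = (\<Sum>m\<le>j. real (Suc m) * real (Stirling j (Suc m)) * (-1) ^ (j + m) * pochhammer x (Suc m))"
  define C where "C = (\<Sum>m\<le>Suc j. real m * real (Stirling j m) * (-1) ^ (j + m) * pochhammer x m)"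
  have RHS: "(\<Sum>m\<le>Suc j. real (Stirling (Suc j) m) * (-1) ^ (Suc j + m) * pochhammer x m) = A + B"
    unfolding A_def B_def
    by (subst sum.atMost_Suc_shift) (simp add: sum.distrib[symmetric] algebra_simps)
  have "C = - B"
    unfolding C_def B_def
    by (subst sum.atMost_Suc_shift) (simp add: sum_negf[symmetric] algebra_simps)
  moreover have "C = (\<Sum>m\<le>j. real m * real (Stirling j m) * (-1) ^ (j + m) * pochhammer x m)"
    unfolding C_def by simp
  moreover have "A = (\<Sum>m\<le>j. real (Stirling j m) * (-1) ^ (j + m) * pochhammer x m * x)
     + (\<Sum>m\<le>j. real m * real (Stirling j m) * (-1) ^ (j + m) * pochhammer x m)"
    unfolding A_def by (simp add: pochhammer_Suc sum.distrib[symmetric] algebra_simps)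
  ultimately have "A + B = x ^ j * x"
    by (simp add: Suc.IH sum_distrib_right)
  then show ?case using RHS by simp
qed

lemma power_series_sums:
  fixes z :: real
  assumes "\<bar>z\<bar> < 1" "j \<ge> 1"
  shows "(\<lambda>k. real k ^ j * z ^ k) sums
     ((-1) ^ j * (z / (1 - z)) * (\<Sum>m=1..j. real (Stirling j m) * fact m * (- 1 / (1 - z)) ^ m))"
proof -
  have "(\<lambda>k. \<Sum>m\<in>{1..j}. real (Stirling j m) * (-1) ^ (j + m) * (pochhammer (real k) m * z ^ k))
     sums (\<Sum>m\<in>{1..j}. real (Stirling j m) * (-1) ^ (j + m) * (fact m * z / (1 - z) ^ (m + 1)))"
    by (intro sums_sum sums_mult poch_sums assms) auto
  moreover have "real k ^ j * z ^ k = (\<Sum>m\<in>{1..j}. real (Stirling j m) * (-1) ^ (j + m) * (pochhammer (real k) m * z ^ k))" for k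
  proof -
    have "real k ^ j = (\<Sum>m\<le>j. real (Stirling j m) * (-1) ^ (j + m) * pochhammer (real k) m)"
      by (rule power_Stirling)
    also have "\<dots> = (\<Sum>m\<in>{1..j}. real (Stirling j m) * (-1) ^ (j + m) * pochhammer (real k) m)"
    proof -
      have "{..j} = insert 0 {1..j}" by auto
      then show ?thesis using assms by (cases j) auto
    qed
    finally show ?thesis by (simp add: sum_distrib_right mult.assoc)
  qed
  moreover have "(\<Sum>m\<in>{1..j}. real (Stirling j m) * (-1) ^ (j + m) * (fact m * z / (1 - z) ^ (m + 1)))
    = (-1) ^ j * (z / (1 - z)) * (\<Sum>m=1..j. real (Stirling j m) * fact m * (- 1 / (1 - z)) ^ m)"
    by (simp add: sum_distrib_left power_add power_divide power_minus' field_simps)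
  ultimately show ?thesis by simp
qed


theorem mainTheorem3:
  fixes n :: nat and y p :: real
  assumes "0 < p" and "p < 1" and "0 \<le> y" and "y < 1" and "n \<ge> 1"
  shows "summable (\<lambda>k. pochhammer (- p * real k) n * (- y) ^ k)
    \<and> Q n y p = (-1) ^ (n + 1) * (y / (y + 1)) *
        (\<Sum>k=1..n. signed_stirling n k * (- p) ^ k *
           (\<Sum>m=1..k. real (Stirling k m) * fact m * (- 1 / (y + 1)) ^ m))
    \<and> (-1) ^ (n + 1) * (y / (y + 1)) *
        (\<Sum>k=1..n. signed_stirling n k * (- p) ^ k *
           (\<Sum>m=1..k. real (Stirling k m) * fact m * (- 1 / (y + 1)) ^ m))
      = (-1) ^ (n + 1) * (y / (y + 1)) *
        (\<Sum>k=1..n. signed_stirling n k * (- p) ^ k * geom_poly k (- 1 / (y + 1)))"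
proof -
  define W where "W j = (\<Sum>m=1..j. real (Stirling j m) * fact m * (- 1 / (y + 1)) ^ m)" for j
  have yabs: "\<bar>- y\<bar> < 1" using assms by simp
  have T: "(\<lambda>k. real k ^ j * (- y) ^ k) sums ((-1) ^ j * (- y / (y + 1)) * W j)" if "j \<ge> 1" for j
    using power_series_sums[OF yabs that] by (simp add: W_def add.commute)
  have splitn: "{..n} = insert 0 {1..n}" by auto
  have termeq: "pochhammer (- p * real k) n * (- y) ^ k
      = (\<Sum>j\<in>{1..n}. real (stirling n j) * (- p) ^ j * (real k ^ j * (- y) ^ k))" for k
  proof -
    have "pochhammer (- p * real k) n = (\<Sum>j\<le>n. real (stirling n j) * (- p * real k) ^ j)"
      by (rule stirling_pochhammer[symmetric])
    also have "\<dots> = (\<Sum>j\<in>{1..n}. real (stirling n j) * (- p * real k) ^ j)"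
      using assms(5) by (simp add: splitn)
    also have "\<dots> = (\<Sum>j\<in>{1..n}. real (stirling n j) * (- p) ^ j * real k ^ j)"
      by (intro sum.cong refl) (simp add: power_mult_distrib power_minus')
    finally show ?thesis by (simp add: sum_distrib_right mult.assoc)
  qed
  have S: "(\<lambda>k. pochhammer (- p * real k) n * (- y) ^ k) sums
      (\<Sum>j\<in>{1..n}. real (stirling n j) * (- p) ^ j * ((-1) ^ j * (- y / (y + 1)) * W j))"
    unfolding termeq by (intro sums_sum sums_mult T) auto
  have eq2: "(\<Sum>j\<in>{1..n}. real (stirling n j) * (- p) ^ j * ((-1) ^ j * (- y / (y + 1)) * W j))
     = (-1) ^ (n + 1) * (y / (y + 1)) * (\<Sum>k=1..n. signed_stirling n k * (- p) ^ k * W k)"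
  proof -
    have sgn: "(-1::real) ^ (n + 1) * (-1) ^ (n - j) = - ((-1) ^ j)" if "j \<le> n" for j
    proof -
      have "n + 1 + (n - j) = j + 1 + 2 * (n - j)" using that by simp
      then have "(-1::real) ^ (n + 1 + (n - j)) = (-1) ^ (j + 1)"
      proof -
        have "(-1::real) ^ (j + 1 + 2 * (n - j)) = (-1) ^ (j + 1) * ((-1) ^ 2) ^ (n - j)"
          by (simp only: power_add power_mult)
        also have "\<dots> = (-1) ^ (j + 1)" by simp
        finally have "(-1::real) ^ (j + 1 + 2 * (n - j)) = (-1) ^ (j + 1)" .
        then show ?thesis unfolding \<open>n + 1 + (n - j) = j + 1 + 2 * (n - j)\<close> .
      qed
      moreover have "(-1::real) ^ (n + 1) * (-1) ^ (n - j) = (-1::real) ^ (n + 1 + (n - j))"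
        by (rule power_add[symmetric])
      ultimately show ?thesis by simp
    qed
    show ?thesis unfolding sum_distrib_left
    proof (intro sum.cong refl)
      fix j assume "j \<in> {1..n}"
      then have "j \<le> n" by simp
      have "(-1) ^ (n + 1) * (y / (y + 1)) * (signed_stirling n j * (- p) ^ j * W j)
        = ((-1::real) ^ (n + 1) * (-1) ^ (n - j)) * ((y / (y + 1)) * real (stirling n j) * (- p) ^ j * W j)"
        by (simp only: signed_stirling_def mult_ac)
      also have "\<dots> = real (stirling n j) * (- p) ^ j * ((-1) ^ j * (- y / (y + 1)) * W j)"
        unfolding sgn[OF \<open>j \<le> n\<close>] by (simp only: mult_ac minus_divide_left mult_minus_left mult_minus_right)
      finally show "real (stirling n j) * (- p) ^ j * ((-1) ^ j * (- y / (y + 1)) * W j)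
        = (-1) ^ (n + 1) * (y / (y + 1)) * (signed_stirling n j * (- p) ^ j * W j)" by (rule sym)
    qed
  qed
  have eq3: "(\<Sum>k=1..n. signed_stirling n k * (- p) ^ k * W k)
     = (\<Sum>k=1..n. signed_stirling n k * (- p) ^ k * geom_poly k (- 1 / (y + 1)))"
  proof (intro sum.cong refl)
    fix k assume "k \<in> {1..n}"
    then have "k \<ge> 1" by simp
    then have "geom_poly k (- 1 / (y + 1)) = W k"
      unfolding geom_poly_def W_def by (subst sum.atLeast_Suc_atMost) (auto simp: Suc_le_eq dest!: gr0_implies_Suc)
    then show "signed_stirling n k * (- p) ^ k * W k = signed_stirling n k * (- p) ^ k * geom_poly k (- 1 / (y + 1))"
      by simp
  qed
  show ?thesis
    using S eq2 eq3 unfolding Q_def W_def[symmetric] by (auto simp: sums_iff)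
qed

end
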